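(* Let $0<x_1<\cdots<x_m<1$, $k_0,k_1\in\mathbb{R}$, $\bar y_1,\dots,\bar y_m\in\mathbb{R}$, and for each $j$ let $\varphi_j:\mathbb{R}\to\mathbb{R}$ be a Gevrey function of order $\sigma$ with $1<\sigma<2$. Put $y_j(t)=\bar y_j\varphi_j(t)$. Then, for every $j$, every $x\in(0,1)$ and every $t$, each of the following series converges: for $x\in(0,x_j)$, $$\sum_{n=0}^\infty\sum_{k=0}^n\frac{x^{2k+1}(x_j-1)^{2(n-k)+1}}{(2k+1)!\,(2(n-k)+1)!}y_j^{(n)}(t),\quad \sum_{n=0}^\infty\sum_{k=0}^n\frac{x^{2k+1}(x_j-1)^{2(n-k)}}{(2k+1)!\,(2(n-k))!}y_j^{(n)}(t),$$ $$\sum_{n=0}^\infty\sum_{k=0}^n\frac{x^{2k}(x_j-1)^{2(n-k)+1}}{(2k)!\,(2(n-k)+1)!}y_j^{(n)}(t),\quad \sum_{n=0}^\infty\sum_{k=0}^n\frac{x^{2k}(x_j-1)^{2(n-k)}}{(2k)!\,(2(n-k))!}y_j^{(n)}(t),$$ the same four series with the roles of $x$ and $x_j$ interchanged (i.e. $x_j^{\cdot}(x-1)^{\cdot}$ in place of $x^{\cdot}(x_j-1)^{\cdot}$) for $x\in[x_j,1)$; and the series $$\sum_{n=0}^\infty\frac{y_j^{(n)}(t)}{(2n+1)!},\qquad \sum_{n=0}^\infty\frac{y_j^{(n)}(t)}{(2n)!},\qquad \sum_{n=0}^\infty\frac{y_j^{(n+1)}(t)}{(2n+1)!}.$$ Consequently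 the series $$\xi^j(x,t)=\sum_{n=0}^\infty\sum_{k=0}^n\Big[\tfrac{k_0k_1x^{2k+1}(x_j-1)^{2(n-k)+1}}{(2k+1)!(2(n-k)+1)!}-\tfrac{k_0x^{2k+1}(x_j-1)^{2(n-k)}}{(2k+1)!(2(n-k))!}+\tfrac{k_1x^{2k}(x_j-1)^{2(n-k)+1}}{(2k)!(2(n-k)+1)!}-\tfrac{x^{2k}(x_j-1)^{2(n-k)}}{(2k)!(2(n-k))!}\Big]y_j^{(n)}(t)$$ for $x\in(0,x_j)$ (and its analogue with $x,x_j$ interchanged for $x\in[x_j,1)$), and $$u_j(t)=k_0k_1\sum_{n=0}^\infty\frac{y_j^{(n)}(t)}{(2n+1)!}+(k_0+k_1)\sum_{n=0}^\infty\frac{y_j^{(n)}(t)}{(2n)!}+\sum_{n=0}^\infty\frac{y_j^{(n+1)}(t)}{(2n+1)!}$$ are convergent.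
   Context: A smooth function $\varphi$ is called a Gevrey function of order $\sigma>0$ if there exist constants $K,M>0$ such that $|\varphi^{(k+1)}(t)|\le M\,(k!)^\sigma/K^k$ for all integers $k\ge0$ and all $t$ (in the paper, $\varphi_j$ are smooth transition functions from 0 to 1, constant outside a bounded interval $[0,T]$, so the bound is required on that interval). *)

theory Defs
  imports "HOL-Analysis.Analysis"
begin

definition smooth_fun :: "(real \<Rightarrow> real) \<Rightarrow> bool" where
  "smooth_fun f \<longleftrightarrow> (\<forall>k t. ((deriv ^^ k) f) differentiable (at t))"

definition gevrey :: "real \<Rightarrow> (real \<Rightarrow> real) \<Rightarrow> bool" where
  "gevrey \<sigma> f \<longleftrightarrow> smooth_fun f \<and>
     (\<exists>K M. K > 0 \<and> M > 0 \<and>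
        (\<forall>k t. \<bar>(deriv ^^ (Suc k)) f t\<bar> \<le> M * (fact k) powr \<sigma> / K ^ k))"

end

theory Submission
  imports Defs
begin

lemma deriv_cmult_iter:
  assumes "smooth_fun f"
  shows "(deriv ^^ n) (\<lambda>s. c * f s) = (\<lambda>s. c * (deriv ^^ n) f s)"
proof (induction n)
  case 0 then show ?case by simp
next
  case (Suc n)
  have "\<And>t. deriv (\<lambda>s. c * (deriv ^^ n) f s) t = c * deriv ((deriv ^^ n) f) t"
  proof -
    fix t
    have d: "((deriv ^^ n) f) differentiable (at t)" using assms unfolding smooth_fun_def by blast
    then obtain D where D: "((deriv ^^ n) f has_real_derivative D) (at t)"
      by (auto simp: real_differentiable_def)
    have "((\<lambda>s. c * (deriv ^^ n) f s) has_real_derivative c * D) (at t)"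
      by (rule DERIV_cmult[OF D])
    then show "deriv (\<lambda>s. c * (deriv ^^ n) f s) t = c * deriv ((deriv ^^ n) f) t"
      using D by (simp add: DERIV_imp_deriv)
  qed
  note H = this
  have "(deriv ^^ Suc n) (\<lambda>s. c * f s) = deriv (\<lambda>s. c * (deriv ^^ n) f s)"
    using Suc.IH by simp
  then show ?case by (simp add: fun_eq_iff H)
qed

lemma fact_prod_bound:
  assumes "p+q \<le> 2*n+2" "2*n \<le> p+q"
  shows "(fact (2*n) :: real) \<le> (4*4^n) * (fact p * fact q)"
proof -
  have "fact (p+q) = fact p * fact q * ((p+q) choose p)"
    using binomial_fact_lemma[of p "p+q"] by simp
  also have "\<dots> \<le> fact p * fact q * 2^(p+q)" using binomial_le_pow2 by simp
  also have "\<dots> \<le> fact p * fact q * 2^(2*n+2)" using assms by (intro mult_left_mono power_increasing) auto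
  finally have a: "fact (p+q) \<le> fact p * fact q * (2::nat)^(2*n+2)" .
  have "(fact (2*n)::nat) \<le> fact (p+q)" using assms fact_mono by blast
  with a have "(fact (2*n)::nat) \<le> fact p * fact q * 2^(2*n+2)" by linarith
  then have "real (fact (2*n)) \<le> real (fact p * fact q * 2^(2*n+2))" by linarith
  moreover have "(2::real)^(2*n+2) = 4*4^n" by (simp add: power_add power_mult)
  ultimately show ?thesis by (simp add: of_nat_fact mult_ac)
qed

lemma term_bound:
  fixes a b R :: real
  assumes "\<bar>a\<bar> \<le> R" "\<bar>b\<bar> \<le> R" "1 \<le> R" "p+q \<le> 2*n+2" "2*n \<le> p+q"
  shows "\<bar>a^p*b^q/(fact p*fact q)\<bar> \<le> (4*R^2)*(4*R^2)^n/fact(2*n)"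
proof -
  have "\<bar>a^p*b^q\<bar> \<le> R^p*R^q"
    unfolding abs_mult power_abs
    by (intro mult_mono power_mono) (use assms in auto)
  also have "\<dots> = R^(p+q)" by (simp add: power_add)
  also have "\<dots> \<le> R^(2*n+2)" using assms by (intro power_increasing) auto
  also have "\<dots> = R^2*(R^2)^n" by (metis power_add power_mult mult.commute)
  finally have h1: "\<bar>a^p*b^q\<bar> \<le> R^2*(R^2)^n" .
  have fp: "(0::real) < fact p * fact q" by simp
  have h2: "1/(fact p*fact q) \<le> (4*4^n)/(fact (2*n)::real)"
    using fact_prod_bound[OF assms(4,5)] fp
    by (simp add: divide_simps mult_ac)
  have "\<bar>a^p*b^q/(fact p*fact q)\<bar> = \<bar>a^p*b^q\<bar> * (1/(fact p*fact q))"
    using fp by simp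
  also have "\<dots> \<le> (R^2*(R^2)^n) * ((4*4^n)/(fact (2*n)::real))"
    by (intro mult_mono h1 h2) auto
  also have "\<dots> = (4*R^2)*(4*R^2)^n/fact(2*n)"
    by (simp add: power_mult_distrib)
  finally show ?thesis .
qed

lemma alg:
  fixes a A K F G P :: real
  assumes "a \<ge> 0" "A > 0" "K > 0" "F > 0" "G > 0" "P > 0"
  shows "(a+2)*A^(Suc n)*(P*F)/(K^(Suc n)*((2*a+2)*(2*a+1)*G)) = (a+1)*A^n*F/(K^n*G) * ((a+2)/(a+1)*A/K*P/((2*a+1)*(2*a+2)))"
proof -
  have h: "a+1 \<noteq> 0" "2*a+1 \<noteq> 0" "2*a+2 \<noteq> 0" "K \<noteq> 0" "G \<noteq> 0" using assms by auto
  show ?thesis using h by (simp add: divide_simps; simp add: algebra_simps)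
qed

lemma g_summable:
  fixes K A \<sigma> :: real
  assumes K: "K > 0" and A: "A > 0" and s: "\<sigma> < 2" "0 \<le> \<sigma>"
  shows "summable (\<lambda>n. (real n+1)*A^n*fact(Suc n) powr \<sigma>/(K^n*fact(2*n)))"
    (is "summable ?g")
proof -
  define r where "r n = (real n+2)/(real n+1) * A/K * (real n+2) powr \<sigma> / ((2*real n+1)*(2*real n+2))" for n
  have gpos: "?g n > 0" for n using K A by simp
  have rec: "?g (Suc n) = ?g n * r n" for n
  proof -
    have f1: "(fact (Suc (Suc n)) :: real) powr \<sigma> = (real n+2) powr \<sigma> * fact (Suc n) powr \<sigma>"
      by (simp add: powr_mult[symmetric] add_ac)
    have f2: "(fact (2*Suc n) :: real) = (2*real n+2)*(2*real n+1)*fact(2*n)"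
      by (simp add: algebra_simps)
    have e1: "real (Suc n) + 1 = real n + 2" by simp
    have Fp: "(fact (Suc n) :: real) powr \<sigma> > 0" by simp
    have Gp: "(fact (2*n) :: real) > 0" by simp
    have Pp: "(real n+2) powr \<sigma> > 0" by simp
    show ?thesis unfolding r_def f1 f2 e1
      using alg[OF _ A K Fp Gp Pp, of "real n" n] by simp
  qed
  have lim: "((\<lambda>n. 2*A/K*(real n+2) powr (\<sigma>-2)) \<longlongrightarrow> 2*A/K*0) sequentially"
  proof (intro tendsto_mult tendsto_const tendsto_neg_powr)
    show "\<sigma> - 2 < 0" using s by simp
    show "filterlim (\<lambda>n. real n + 2) at_top sequentially"
      using filterlim_tendsto_add_at_top[OF tendsto_const filterlim_real_sequentially, of 2]
      by (simp add: add.commute)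
  qed
  then have "eventually (\<lambda>n. 2*A/K*(real n+2) powr (\<sigma>-2) < 1/2) sequentially"
    by (intro order_tendstoD) auto
  then obtain N where N: "\<And>n. n \<ge> N \<Longrightarrow> 2*A/K*(real n+2) powr (\<sigma>-2) < 1/2"
    by (auto simp: eventually_sequentially)
  have rb: "r n \<le> 2*A/K*(real n+2) powr (\<sigma>-2)" if n1: "1 \<le> n" for n
  proof -
    have p: "(real n+2) powr (\<sigma>-2) = (real n+2) powr \<sigma> / (real n+2)^2"
      by (simp add: powr_diff powr_realpow)
    have q1: "(real n+2)/(real n+1) \<le> 2" by (simp add: divide_simps)
    have q2: "(real n+2) powr \<sigma> / ((2*real n+1)*(2*real n+2)) \<le> (real n+2) powr \<sigma> / (real n+2)^2"
    proof -
      have n1: "1 \<le> real n" using n1 by simp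
      have nn: "real n * 1 \<le> real n * real n" by (rule mult_left_mono[OF n1]) simp
      have e: "(2*real n+1)*(2*real n+2) - (real n+2)^2 = 3*(real n*real n) + 2*real n - 2"
        by (simp add: power2_eq_square algebra_simps)
      have "(real n+2)^2 \<le> (2*real n+1)*(2*real n+2)" using e n1 nn by linarith
      then show ?thesis by (intro divide_left_mono) auto
    qed
    have "r n = ((real n+2)/(real n+1)) * (A/K) * ((real n+2) powr \<sigma> / ((2*real n+1)*(2*real n+2)))"
      unfolding r_def by simp
    also have "\<dots> \<le> 2 * (A/K) * ((real n+2) powr \<sigma> / (real n+2)^2)"
      using K A by (intro mult_mono q1 q2) auto
    finally show ?thesis unfolding p by simp
  qed
  show ?thesis
  proof (rule summable_ratio_test[of "1/2" "max N 1"])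
    fix n assume "max N 1 \<le> n"
    then have "r n \<le> 1/2" using N[of n] rb[of n] by simp
    then have "?g n * r n \<le> ?g n * (1/2)"
      by (rule mult_left_mono) (use gpos[of n] in linarith)
    then have "?g (Suc n) \<le> 1/2 * ?g n" unfolding rec by (simp only: mult.commute)
    then show "norm (?g (Suc n)) \<le> 1/2 * norm (?g n)"
      unfolding real_norm_def abs_of_pos[OF gpos[of n]] abs_of_pos[OF gpos[of "Suc n"]] .
  qed simp
qed

lemma main_sum:
  fixes d :: "nat \<Rightarrow> real" and B :: "nat \<Rightarrow> nat \<Rightarrow> real"
  assumes K: "K > 0" and A: "A > 0" and s: "\<sigma> < 2" "0 \<le> \<sigma>"
    and db: "\<And>n. \<bar>d n\<bar> \<le> C*fact(Suc n) powr \<sigma>/K^n"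
    and Bb: "\<And>n k. k\<le>n \<Longrightarrow> \<bar>B n k\<bar> \<le> D*A^n/fact(2*n)"
  shows "summable (\<lambda>n. \<Sum>k\<le>n. B n k * d n)"
proof (rule summable_comparison_test)
  show "summable (\<lambda>n. (D*C) * ((real n+1)*A^n*fact(Suc n) powr \<sigma>/(K^n*fact(2*n))))"
    by (intro summable_mult g_summable K A s)
  show "\<exists>N. \<forall>n\<ge>N. norm (\<Sum>k\<le>n. B n k * d n) \<le> (D*C) * ((real n+1)*A^n*fact(Suc n) powr \<sigma>/(K^n*fact(2*n)))"
  proof (intro exI allI impI)
    fix n :: nat
    have nn: "0 \<le> D*A^n/fact(2*n)" using Bb[of 0 n] by linarith
    have "norm (\<Sum>k\<le>n. B n k * d n) \<le> (\<Sum>k\<le>n. \<bar>B n k * d n\<bar>)"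
      by (metis real_norm_def sum_abs)
    also have "\<dots> \<le> (\<Sum>k\<le>n. (D*A^n/fact(2*n)) * (C*fact(Suc n) powr \<sigma>/K^n))"
      unfolding abs_mult by (intro sum_mono mult_mono Bb db nn) auto
    also have "\<dots> = (D*C) * ((real n+1)*A^n*fact(Suc n) powr \<sigma>/(K^n*fact(2*n)))"
      by (simp add: field_simps)
    finally show "norm (\<Sum>k\<le>n. B n k * d n) \<le> (D*C) * ((real n+1)*A^n*fact(Suc n) powr \<sigma>/(K^n*fact(2*n)))" .
  qed
qed

lemma single_sum:
  fixes d c :: "nat \<Rightarrow> real"
  assumes K: "K > 0" and s: "\<sigma> < 2" "0 \<le> \<sigma>"
    and db: "\<And>n. \<bar>d n\<bar> \<le> C*fact(Suc n) powr \<sigma>/K^n"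
    and cb: "\<And>n. \<bar>c n\<bar> \<le> 1/fact(2*n)"
  shows "summable (\<lambda>n. c n * d n)"
proof -
  have "summable (\<lambda>n. \<Sum>k\<le>n. (if k = 0 then c n else 0) * d n)"
    by (rule main_sum[OF K _ s db, where A=1 and D=1]) (use cb in auto)
  moreover have "(\<Sum>k\<le>n. (if k = 0 then c n else 0) * d n) = c n * d n" for n
  proof -
    have "(\<Sum>k\<le>n. (if k = 0 then c n else 0) * d n) = (\<Sum>k\<le>n. if k = 0 then c n * d n else 0)"
      by (rule sum.cong) auto
    also have "\<dots> = c n * d n" by (subst sum.delta) auto
    finally show ?thesis .
  qed
  ultimately show ?thesis by simp
qed

lemma combo_bound:
  fixes u1 u2 u3 u4 T a b c :: real
  assumes "\<bar>u1\<bar> \<le> T" "\<bar>u2\<bar> \<le> T" "\<bar>u3\<bar> \<le> T" "\<bar>u4\<bar> \<le> T"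
  shows "\<bar>a*u1 - b*u2 + c*u3 - u4\<bar> \<le> (\<bar>a\<bar>+\<bar>b\<bar>+\<bar>c\<bar>+1)*T"
proof -
  have "\<bar>a*u1\<bar> \<le> \<bar>a\<bar>*T" "\<bar>b*u2\<bar> \<le> \<bar>b\<bar>*T" "\<bar>c*u3\<bar> \<le> \<bar>c\<bar>*T"
    using assms by (auto simp: abs_mult intro: mult_left_mono)
  then show ?thesis using assms(4) by (simp add: algebra_simps) linarith
qed

lemma case_lemma:
  fixes a b R K \<sigma> C k0 k1 :: real and d :: "nat \<Rightarrow> real"
  assumes ab: "\<bar>a\<bar> \<le> R" "\<bar>b\<bar> \<le> R" "1 \<le> R" and K: "K > 0" and s: "\<sigma> < 2" "0 \<le> \<sigma>"
    and db: "\<And>n. \<bar>d n\<bar> \<le> C*fact(Suc n) powr \<sigma>/K^n"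
  shows
   "summable (\<lambda>n. \<Sum>k\<le>n. a^(2*k+1) * b^(2*(n-k)+1) / (fact (2*k+1) * fact (2*(n-k)+1)) * d n) \<and>
    summable (\<lambda>n. \<Sum>k\<le>n. a^(2*k+1) * b^(2*(n-k)) / (fact (2*k+1) * fact (2*(n-k))) * d n) \<and>
    summable (\<lambda>n. \<Sum>k\<le>n. a^(2*k) * b^(2*(n-k)+1) / (fact (2*k) * fact (2*(n-k)+1)) * d n) \<and>
    summable (\<lambda>n. \<Sum>k\<le>n. a^(2*k) * b^(2*(n-k)) / (fact (2*k) * fact (2*(n-k))) * d n) \<and>
    summable (\<lambda>n. \<Sum>k\<le>n.
            (k0 * k1 * a^(2*k+1) * b^(2*(n-k)+1) / (fact (2*k+1) * fact (2*(n-k)+1))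
             - k0 * a^(2*k+1) * b^(2*(n-k)) / (fact (2*k+1) * fact (2*(n-k)))
             + k1 * a^(2*k) * b^(2*(n-k)+1) / (fact (2*k) * fact (2*(n-k)+1))
             - a^(2*k) * b^(2*(n-k)) / (fact (2*k) * fact (2*(n-k)))) * d n)"
proof -
  have A: "4*R^2 > 0" using ab by simp
  define T where "T n = (4*R^2)*(4*R^2)^n/fact(2*n)" for n :: nat
  have t1: "\<bar>a^(2*k+1) * b^(2*(n-k)+1) / (fact (2*k+1) * fact (2*(n-k)+1))\<bar> \<le> T n" if "k \<le> n" for n k
    unfolding T_def by (rule term_bound[OF ab]) (use that in auto)
  have t2: "\<bar>a^(2*k+1) * b^(2*(n-k)) / (fact (2*k+1) * fact (2*(n-k)))\<bar> \<le> T n" if "k \<le> n" for n k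
    unfolding T_def by (rule term_bound[OF ab]) (use that in auto)
  have t3: "\<bar>a^(2*k) * b^(2*(n-k)+1) / (fact (2*k) * fact (2*(n-k)+1))\<bar> \<le> T n" if "k \<le> n" for n k
    unfolding T_def by (rule term_bound[OF ab]) (use that in auto)
  have t4: "\<bar>a^(2*k) * b^(2*(n-k)) / (fact (2*k) * fact (2*(n-k)))\<bar> \<le> T n" if "k \<le> n" for n k
    unfolding T_def by (rule term_bound[OF ab]) (use that in auto)
  have eqs: "k0 * k1 * a^(2*k+1) * b^(2*(n-k)+1) / (fact (2*k+1) * fact (2*(n-k)+1))
             - k0 * a^(2*k+1) * b^(2*(n-k)) / (fact (2*k+1) * fact (2*(n-k)))
             + k1 * a^(2*k) * b^(2*(n-k)+1) / (fact (2*k) * fact (2*(n-k)+1))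
             - a^(2*k) * b^(2*(n-k)) / (fact (2*k) * fact (2*(n-k)))
     = (k0*k1) * (a^(2*k+1) * b^(2*(n-k)+1) / (fact (2*k+1) * fact (2*(n-k)+1)))
       - k0 * (a^(2*k+1) * b^(2*(n-k)) / (fact (2*k+1) * fact (2*(n-k))))
       + k1 * (a^(2*k) * b^(2*(n-k)+1) / (fact (2*k) * fact (2*(n-k)+1)))
       - (a^(2*k) * b^(2*(n-k)) / (fact (2*k) * fact (2*(n-k))))" for n k
    by (simp add: mult.assoc)
  show ?thesis
  proof (intro conjI)
    show "summable (\<lambda>n. \<Sum>k\<le>n. a^(2*k+1) * b^(2*(n-k)+1) / (fact (2*k+1) * fact (2*(n-k)+1)) * d n)"
      by (rule main_sum[OF K A s db]) (use t1 in \<open>auto simp: T_def\<close>)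
    show "summable (\<lambda>n. \<Sum>k\<le>n. a^(2*k+1) * b^(2*(n-k)) / (fact (2*k+1) * fact (2*(n-k))) * d n)"
      by (rule main_sum[OF K A s db]) (use t2 in \<open>auto simp: T_def\<close>)
    show "summable (\<lambda>n. \<Sum>k\<le>n. a^(2*k) * b^(2*(n-k)+1) / (fact (2*k) * fact (2*(n-k)+1)) * d n)"
      by (rule main_sum[OF K A s db]) (use t3 in \<open>auto simp: T_def\<close>)
    show "summable (\<lambda>n. \<Sum>k\<le>n. a^(2*k) * b^(2*(n-k)) / (fact (2*k) * fact (2*(n-k))) * d n)"
      by (rule main_sum[OF K A s db]) (use t4 in \<open>auto simp: T_def\<close>)
    show "summable (\<lambda>n. \<Sum>k\<le>n.
            (k0 * k1 * a^(2*k+1) * b^(2*(n-k)+1) / (fact (2*k+1) * fact (2*(n-k)+1))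
             - k0 * a^(2*k+1) * b^(2*(n-k)) / (fact (2*k+1) * fact (2*(n-k)))
             + k1 * a^(2*k) * b^(2*(n-k)+1) / (fact (2*k) * fact (2*(n-k)+1))
             - a^(2*k) * b^(2*(n-k)) / (fact (2*k) * fact (2*(n-k)))) * d n)"
    proof (rule main_sum[OF K A s db, where D = "(\<bar>k0*k1\<bar>+\<bar>k0\<bar>+\<bar>k1\<bar>+1)*(4*R^2)"])
      fix n k :: nat assume "k \<le> n"
      then show "\<bar>k0 * k1 * a^(2*k+1) * b^(2*(n-k)+1) / (fact (2*k+1) * fact (2*(n-k)+1))
             - k0 * a^(2*k+1) * b^(2*(n-k)) / (fact (2*k+1) * fact (2*(n-k)))
             + k1 * a^(2*k) * b^(2*(n-k)+1) / (fact (2*k) * fact (2*(n-k)+1))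
             - a^(2*k) * b^(2*(n-k)) / (fact (2*k) * fact (2*(n-k)))\<bar>
           \<le> (\<bar>k0*k1\<bar>+\<bar>k0\<bar>+\<bar>k1\<bar>+1)*(4*R^2) * (4*R^2)^n / fact (2*n)"
      proof -
        have r: "(\<bar>k0*k1\<bar>+\<bar>k0\<bar>+\<bar>k1\<bar>+1)*(4*R^2) * (4*R^2)^n / fact (2*n) = (\<bar>k0*k1\<bar>+\<bar>k0\<bar>+\<bar>k1\<bar>+1) * T n"
          by (simp add: T_def mult.assoc)
        show ?thesis unfolding eqs r using \<open>k \<le> n\<close>
          by (intro combo_bound t1 t2 t3 t4)
      qed
    qed
  qed
qed

theorem proposition3:
  fixes m :: nat and xs :: "nat \<Rightarrow> real" and k0 k1 \<sigma> :: real
    and ybar :: "nat \<Rightarrow> real" and \<phi> :: "nat \<Rightarrow> real \<Rightarrow> real"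
  assumes x_pos: "m \<ge> 1 \<Longrightarrow> 0 < xs 1"
    and x_lt1: "m \<ge> 1 \<Longrightarrow> xs m < 1"
    and x_mono: "\<And>i. 1 \<le> i \<Longrightarrow> i < m \<Longrightarrow> xs i < xs (Suc i)"
    and sigma: "1 < \<sigma>" "\<sigma> < 2"
    and gev: "\<And>j. j \<in> {1..m} \<Longrightarrow> gevrey \<sigma> (\<phi> j)"
  shows "\<forall>j \<in> {1..m}. \<forall>x \<in> {0<..<1}. \<forall>t::real.
    (let y = (\<lambda>s. ybar j * \<phi> j s); xj = xs j in
     (x < xj \<longrightarrow>
        summable (\<lambda>n. \<Sum>k\<le>n. x^(2*k+1) * (xj-1)^(2*(n-k)+1) / (fact (2*k+1) * fact (2*(n-k)+1)) * (deriv ^^ n) y t) \<and>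
        summable (\<lambda>n. \<Sum>k\<le>n. x^(2*k+1) * (xj-1)^(2*(n-k)) / (fact (2*k+1) * fact (2*(n-k))) * (deriv ^^ n) y t) \<and>
        summable (\<lambda>n. \<Sum>k\<le>n. x^(2*k) * (xj-1)^(2*(n-k)+1) / (fact (2*k) * fact (2*(n-k)+1)) * (deriv ^^ n) y t) \<and>
        summable (\<lambda>n. \<Sum>k\<le>n. x^(2*k) * (xj-1)^(2*(n-k)) / (fact (2*k) * fact (2*(n-k))) * (deriv ^^ n) y t) \<and>
        summable (\<lambda>n. \<Sum>k\<le>n.
            (k0 * k1 * x^(2*k+1) * (xj-1)^(2*(n-k)+1) / (fact (2*k+1) * fact (2*(n-k)+1))
             - k0 * x^(2*k+1) * (xj-1)^(2*(n-k)) / (fact (2*k+1) * fact (2*(n-k)))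
             + k1 * x^(2*k) * (xj-1)^(2*(n-k)+1) / (fact (2*k) * fact (2*(n-k)+1))
             - x^(2*k) * (xj-1)^(2*(n-k)) / (fact (2*k) * fact (2*(n-k)))) * (deriv ^^ n) y t)) \<and>
     (xj \<le> x \<longrightarrow>
        summable (\<lambda>n. \<Sum>k\<le>n. xj^(2*k+1) * (x-1)^(2*(n-k)+1) / (fact (2*k+1) * fact (2*(n-k)+1)) * (deriv ^^ n) y t) \<and>
        summable (\<lambda>n. \<Sum>k\<le>n. xj^(2*k+1) * (x-1)^(2*(n-k)) / (fact (2*k+1) * fact (2*(n-k))) * (deriv ^^ n) y t) \<and>
        summable (\<lambda>n. \<Sum>k\<le>n. xj^(2*k) * (x-1)^(2*(n-k)+1) / (fact (2*k) * fact (2*(n-k)+1)) * (deriv ^^ n) y t) \<and>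
        summable (\<lambda>n. \<Sum>k\<le>n. xj^(2*k) * (x-1)^(2*(n-k)) / (fact (2*k) * fact (2*(n-k))) * (deriv ^^ n) y t) \<and>
        summable (\<lambda>n. \<Sum>k\<le>n.
            (k0 * k1 * xj^(2*k+1) * (x-1)^(2*(n-k)+1) / (fact (2*k+1) * fact (2*(n-k)+1))
             - k0 * xj^(2*k+1) * (x-1)^(2*(n-k)) / (fact (2*k+1) * fact (2*(n-k)))
             + k1 * xj^(2*k) * (x-1)^(2*(n-k)+1) / (fact (2*k) * fact (2*(n-k)+1))
             - xj^(2*k) * (x-1)^(2*(n-k)) / (fact (2*k) * fact (2*(n-k)))) * (deriv ^^ n) y t)) \<and>
     summable (\<lambda>n. (deriv ^^ n) y t / fact (2*n+1)) \<and>
     summable (\<lambda>n. (deriv ^^ n) y t / fact (2*n)) \<and>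
     summable (\<lambda>n. (deriv ^^ (Suc n)) y t / fact (2*n+1)))"
proof (intro ballI allI)
  fix j x t assume j: "j \<in> {1..m}" and x: "x \<in> {0<..<(1::real)}"
  have s: "\<sigma> < 2" "0 \<le> \<sigma>" using sigma by auto
  obtain K M where K: "K > 0" and M: "M > 0"
    and bnd: "\<And>k t. \<bar>(deriv ^^ (Suc k)) (\<phi> j) t\<bar> \<le> M * (fact k) powr \<sigma> / K ^ k"
    using gev[OF j] unfolding gevrey_def by blast
  have sm: "smooth_fun (\<phi> j)" using gev[OF j] unfolding gevrey_def by blast
  define c where "c = ybar j"
  define d where "d n = (deriv ^^ n) (\<lambda>s. ybar j * \<phi> j s) t" for n
  have dd: "d n = c * (deriv ^^ n) (\<phi> j) t" for n
    unfolding d_def c_def deriv_cmult_iter[OF sm] by simp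
  have fpos: "(fact k :: real) powr \<sigma> \<le> fact (Suc k) powr \<sigma>" for k
    by (rule powr_mono2) (use s in \<open>auto simp: fact_mono\<close>)
  have dS: "\<bar>d (Suc k)\<bar> \<le> (\<bar>c\<bar>*M) * fact (Suc k) powr \<sigma> / K^k" for k
  proof -
    have "\<bar>d (Suc k)\<bar> \<le> \<bar>c\<bar> * (M * (fact k) powr \<sigma> / K ^ k)"
      unfolding dd abs_mult by (intro mult_left_mono bnd) auto
    also have "\<dots> \<le> \<bar>c\<bar> * (M * (fact (Suc k)) powr \<sigma> / K ^ k)"
      using K M fpos[of k] by (intro mult_left_mono divide_right_mono) auto
    finally show ?thesis by simp
  qed
  define C where "C = \<bar>c\<bar> * (\<bar>(\<phi> j) t\<bar> + M*K)"
  have D0: "\<bar>d n\<bar> \<le> C * fact (Suc n) powr \<sigma> / K^n" for n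
  proof (cases n)
    case 0
    have "\<bar>d 0\<bar> = \<bar>c\<bar> * \<bar>\<phi> j t\<bar>" unfolding dd by (simp add: abs_mult)
    also have "\<dots> \<le> C" unfolding C_def using K M by (intro mult_left_mono) auto
    finally show ?thesis using 0 by simp
  next
    case (Suc k)
    have "\<bar>d (Suc k)\<bar> \<le> \<bar>c\<bar> * (M * (fact k) powr \<sigma> / K ^ k)"
      unfolding dd abs_mult by (intro mult_left_mono bnd) auto
    also have "\<dots> = \<bar>c\<bar> * (M*K) * (fact k) powr \<sigma> / K ^ Suc k" using K by simp
    also have "\<dots> \<le> C * (fact (Suc (Suc k))) powr \<sigma> / K ^ Suc k"
    proof (intro divide_right_mono mult_mono)
      show "\<bar>c\<bar> * (M*K) \<le> C" unfolding C_def by (intro mult_left_mono) auto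
      show "(fact k :: real) powr \<sigma> \<le> fact (Suc (Suc k)) powr \<sigma>"
        using fpos[of k] fpos[of "Suc k"] by linarith
    qed (use K M in \<open>auto simp: C_def\<close>)
    finally show ?thesis using Suc by simp
  qed
  define R where "R = 1 + \<bar>x\<bar> + \<bar>xs j\<bar>"
  have R: "\<bar>x\<bar> \<le> R" "\<bar>xs j - 1\<bar> \<le> R" "\<bar>xs j\<bar> \<le> R" "\<bar>x - 1\<bar> \<le> R" "1 \<le> R"
    unfolding R_def by auto
  note c1 = case_lemma[OF R(1) R(2) R(5) K s D0, of k0 k1]
  note c2 = case_lemma[OF R(3) R(4) R(5) K s D0, of k0 k1]
  have s1: "summable (\<lambda>n. (1/fact (2*n+1)) * d n)"
    by (rule single_sum[OF K s D0]) (simp add: divide_simps fact_mono)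
  have s2: "summable (\<lambda>n. (1/fact (2*n)) * d n)"
    by (rule single_sum[OF K s D0]) simp
  have s3: "summable (\<lambda>n. (1/fact (2*n+1)) * d (Suc n))"
    by (rule single_sum[OF K s dS]) (simp add: divide_simps fact_mono)
  show "(let y = (\<lambda>s. ybar j * \<phi> j s); xj = xs j in
     (x < xj \<longrightarrow>
        summable (\<lambda>n. \<Sum>k\<le>n. x^(2*k+1) * (xj-1)^(2*(n-k)+1) / (fact (2*k+1) * fact (2*(n-k)+1)) * (deriv ^^ n) y t) \<and>
        summable (\<lambda>n. \<Sum>k\<le>n. x^(2*k+1) * (xj-1)^(2*(n-k)) / (fact (2*k+1) * fact (2*(n-k))) * (deriv ^^ n) y t) \<and>
        summable (\<lambda>n. \<Sum>k\<le>n. x^(2*k) * (xj-1)^(2*(n-k)+1) / (fact (2*k) * fact (2*(n-k)+1)) * (deriv ^^ n) y t) \<and>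
        summable (\<lambda>n. \<Sum>k\<le>n. x^(2*k) * (xj-1)^(2*(n-k)) / (fact (2*k) * fact (2*(n-k))) * (deriv ^^ n) y t) \<and>
        summable (\<lambda>n. \<Sum>k\<le>n.
            (k0 * k1 * x^(2*k+1) * (xj-1)^(2*(n-k)+1) / (fact (2*k+1) * fact (2*(n-k)+1))
             - k0 * x^(2*k+1) * (xj-1)^(2*(n-k)) / (fact (2*k+1) * fact (2*(n-k)))
             + k1 * x^(2*k) * (xj-1)^(2*(n-k)+1) / (fact (2*k) * fact (2*(n-k)+1))
             - x^(2*k) * (xj-1)^(2*(n-k)) / (fact (2*k) * fact (2*(n-k)))) * (deriv ^^ n) y t)) \<and>
     (xj \<le> x \<longrightarrow>
        summable (\<lambda>n. \<Sum>k\<le>n. xj^(2*k+1) * (x-1)^(2*(n-k)+1) / (fact (2*k+1) * fact (2*(n-k)+1)) * (deriv ^^ n) y t) \<and>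
        summable (\<lambda>n. \<Sum>k\<le>n. xj^(2*k+1) * (x-1)^(2*(n-k)) / (fact (2*k+1) * fact (2*(n-k))) * (deriv ^^ n) y t) \<and>
        summable (\<lambda>n. \<Sum>k\<le>n. xj^(2*k) * (x-1)^(2*(n-k)+1) / (fact (2*k) * fact (2*(n-k)+1)) * (deriv ^^ n) y t) \<and>
        summable (\<lambda>n. \<Sum>k\<le>n. xj^(2*k) * (x-1)^(2*(n-k)) / (fact (2*k) * fact (2*(n-k))) * (deriv ^^ n) y t) \<and>
        summable (\<lambda>n. \<Sum>k\<le>n.
            (k0 * k1 * xj^(2*k+1) * (x-1)^(2*(n-k)+1) / (fact (2*k+1) * fact (2*(n-k)+1))
             - k0 * xj^(2*k+1) * (x-1)^(2*(n-k)) / (fact (2*k+1) * fact (2*(n-k)))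
             + k1 * xj^(2*k) * (x-1)^(2*(n-k)+1) / (fact (2*k) * fact (2*(n-k)+1))
             - xj^(2*k) * (x-1)^(2*(n-k)) / (fact (2*k) * fact (2*(n-k)))) * (deriv ^^ n) y t)) \<and>
     summable (\<lambda>n. (deriv ^^ n) y t / fact (2*n+1)) \<and>
     summable (\<lambda>n. (deriv ^^ n) y t / fact (2*n)) \<and>
     summable (\<lambda>n. (deriv ^^ (Suc n)) y t / fact (2*n+1)))"
    unfolding Let_def using c1 c2 s1 s2 s3 unfolding d_def by simp
qed

end
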